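(* For every $M\ge1$ and every $\mathbf p=(p_1,\dots,p_M)\in(0,1)^M$, $$\lim_{\kappa\to\infty}\chi(\mathbf p;\kappa)=\mathrm{Sto}(\mathbf p)=1-\Phi\Big(\frac{1}{\sqrt M}\sum_{i=1}^M\Phi^{-1}(1-p_i)\Big).$$
   Context: $F_\chi(x;\kappa)$ denotes the CDF of the $\chi^2$ distribution with $\kappa>0$ degrees of freedom, $F_\chi(x;\kappa)=\int_0^x\frac{t^{\kappa/2-1}e^{-t/2}}{2^{\kappa/2}\Gamma(\kappa/2)}dt$, and $F_\chi^{-1}(\cdot;\kappa)$ its quantile function. The chi-squared quantile pooled $p$-value is $\chi(\mathbf p;\kappa)=1-F_\chi\big(\sum_{i=1}^M F_\chi^{-1}(1-p_i;\kappa);\,M\kappa\big)$. $\Phi$ is the standard normal CDF. *)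

theory Defs
  imports "HOL-Probability.Probability"
begin

definition chi2_density :: "real \<Rightarrow> real \<Rightarrow> real" where
  "chi2_density \<kappa> t =
     (if t > 0 then t powr (\<kappa>/2 - 1) * exp (- t/2) / (2 powr (\<kappa>/2) * Gamma (\<kappa>/2)) else 0)"

definition chi2_cdf :: "real \<Rightarrow> real \<Rightarrow> real" where
  "chi2_cdf \<kappa> x = (LBINT t:{0..x}. chi2_density \<kappa> t)"

definition chi2_quantile :: "real \<Rightarrow> real \<Rightarrow> real" where
  "chi2_quantile \<kappa> q = Inf {x. q \<le> chi2_cdf \<kappa> x}"

definition chi_pool :: "nat \<Rightarrow> (nat \<Rightarrow> real) \<Rightarrow> real \<Rightarrow> real" where
  "chi_pool M p \<kappa> =
     1 - chi2_cdf (real M * \<kappa>) (\<Sum>i=1..M. chi2_quantile \<kappa> (1 - p i))"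

definition Phi :: "real \<Rightarrow> real" where
  "Phi x = (LBINT t:{..x}. std_normal_density t)"

definition Phi_inv :: "real \<Rightarrow> real" where
  "Phi_inv q = Inf {x. q \<le> Phi x}"

definition Sto :: "nat \<Rightarrow> (nat \<Rightarrow> real) \<Rightarrow> real" where
  "Sto M p = 1 - Phi ((1 / sqrt (real M)) * (\<Sum>i=1..M. Phi_inv (1 - p i)))"

end

theory Submission
  imports Defs "HOL-Real_Asymp.Real_Asymp"
begin


lemma Phi_alt: "Phi x = (\<integral>t. indicator {..x} t * std_normal_density t \<partial>lborel)"
  by (simp add: Phi_def set_lebesgue_integral_def)

lemma int_ind_normal[simp]: "integrable lborel (\<lambda>t. indicator A t * std_normal_density t)"
  if "A \<in> sets borel" for A
  using integrable_mult_indicator[of A lborel std_normal_density] that by simp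

lemma Phi_diff:
  assumes "x \<le> y"
  shows "Phi y - Phi x = (\<integral>t. indicator {x<..y} t * std_normal_density t \<partial>lborel)"
proof -
  have "Phi y = (\<integral>t. indicator {..x} t * std_normal_density t + indicator {x<..y} t * std_normal_density t \<partial>lborel)"
    unfolding Phi_alt
    by (rule Bochner_Integration.integral_cong) (use assms in \<open>auto simp: indicator_def\<close>)
  also have "\<dots> = Phi x + (\<integral>t. indicator {x<..y} t * std_normal_density t \<partial>lborel)"
    unfolding Phi_alt by (rule Bochner_Integration.integral_add) auto
  finally show ?thesis by simp
qed

lemma Phi_diff_bounds:
  assumes "x \<le> y"
  shows "std_normal_density (\<bar>x\<bar> + \<bar>y\<bar>) * (y - x) \<le> Phi y - Phi x"
    and "Phi y - Phi x \<le> y - x"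
proof -
  have ms: "(\<integral>t. indicator {x<..y} t * c \<partial>lborel) = c * (y - x)" for c :: real
    using assms by (simp add: mult.commute)
  have dle: "std_normal_density t \<le> 1" for t
  proof -
    have "exp (- t\<^sup>2 / 2) \<le> 1" by simp
    moreover have "1 \<le> sqrt (2 * pi)" using pi_gt3 by (simp add: real_le_rsqrt)
    ultimately have "exp (- t\<^sup>2 / 2) \<le> sqrt (2 * pi)" by linarith
    then show ?thesis unfolding std_normal_density_def
      by (simp add: divide_le_eq_1)
  qed
  have dge: "std_normal_density (\<bar>x\<bar> + \<bar>y\<bar>) \<le> std_normal_density t" if "t \<in> {x<..y}" for t
  proof -
    have "t\<^sup>2 \<le> (\<bar>x\<bar> + \<bar>y\<bar>)\<^sup>2"
      using that by (subst abs_le_square_iff[symmetric]) auto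
    then show ?thesis unfolding std_normal_density_def
      by (intro mult_left_mono) auto
  qed
  have i1: "integrable lborel (\<lambda>t. indicator {x<..y} t * c)" for c :: real
    using assms by (intro integrable_mult_left integrable_real_indicator) auto
  have "(\<integral>t. indicator {x<..y} t * std_normal_density (\<bar>x\<bar> + \<bar>y\<bar>) \<partial>lborel)
        \<le> (\<integral>t. indicator {x<..y} t * std_normal_density t \<partial>lborel)"
    by (rule integral_mono[OF i1 int_ind_normal]) (use dge in \<open>auto simp: indicator_def\<close>)
  then show "std_normal_density (\<bar>x\<bar> + \<bar>y\<bar>) * (y - x) \<le> Phi y - Phi x"
    using ms[of "std_normal_density (\<bar>x\<bar> + \<bar>y\<bar>)"] Phi_diff[OF assms] by linarith
  have "(\<integral>t. indicator {x<..y} t * std_normal_density t \<partial>lborel)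
        \<le> (\<integral>t. indicator {x<..y} t * 1 \<partial>lborel)"
    by (rule integral_mono[OF int_ind_normal i1]) (use dle in \<open>auto simp: indicator_def\<close>)
  then show "Phi y - Phi x \<le> y - x"
    unfolding Phi_diff[OF assms] using ms[of 1] by (metis mult_1)
qed

lemma Phi_mono: "x \<le> y \<Longrightarrow> Phi x \<le> Phi y"
  using Phi_diff_bounds(1)[of x y] normal_density_nonneg[of 0 1 "\<bar>x\<bar> + \<bar>y\<bar>"]
  by (smt (verit) mult_nonneg_nonneg)

lemma Phi_strict: "x < y \<Longrightarrow> Phi x < Phi y"
  using Phi_diff_bounds(1)[of x y] normal_density_pos[of 1 0 "\<bar>x\<bar> + \<bar>y\<bar>"]
  by (smt (verit) mult_pos_pos)

lemma Phi_lip: "\<bar>Phi y - Phi x\<bar> \<le> \<bar>y - x\<bar>"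
  using Phi_diff_bounds(2)[of x y] Phi_diff_bounds(2)[of y x] Phi_mono[of x y] Phi_mono[of y x]
  by (cases "x \<le> y") auto

lemma Phi_top: "(Phi \<longlongrightarrow> 1) at_top"
proof -
  have "((\<lambda>x. \<integral>t. indicator {..x} t * std_normal_density t \<partial>lborel)
        \<longlongrightarrow> (\<integral>t. std_normal_density t \<partial>lborel)) at_top"
  proof (rule integral_dominated_convergence_at_top[where w=std_normal_density])
    show "AE t in lborel. ((\<lambda>x. indicator {..x} t * std_normal_density t) \<longlongrightarrow> std_normal_density t) at_top"
    proof (rule AE_I2)
      fix t :: real
      have "\<forall>\<^sub>F x in at_top. indicator {..x} t * std_normal_density t = std_normal_density t"
        using eventually_ge_at_top[of t] by eventually_elim auto
      then show "((\<lambda>x. indicator {..x} t * std_normal_density t) \<longlongrightarrow> std_normal_density t) at_top"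
        by (rule tendsto_eventually)
    qed
  qed (auto simp: indicator_def)
  then show ?thesis unfolding Phi_alt[abs_def] by simp
qed

lemma Phi_bot: "((\<lambda>x. Phi (- x)) \<longlongrightarrow> 0) at_top"
proof -
  have "((\<lambda>x. \<integral>t. indicator {..-x} t * std_normal_density t \<partial>lborel)
        \<longlongrightarrow> (\<integral>(t::real). 0 \<partial>lborel)) at_top"
  proof (rule integral_dominated_convergence_at_top[where w=std_normal_density and f="\<lambda>_. 0" and s="\<lambda>x t. indicator {..-x} t * std_normal_density t"])
    show "AE t in lborel. ((\<lambda>x. indicator {..-x} t * std_normal_density t) \<longlongrightarrow> 0) at_top"
    proof (rule AE_I2)
      fix t :: real
      have "\<forall>\<^sub>F x in at_top. indicator {..-x} t * std_normal_density t = 0"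
        using eventually_gt_at_top[of "-t"] by eventually_elim auto
      then show "((\<lambda>x. indicator {..-x} t * std_normal_density t) \<longlongrightarrow> 0) at_top"
        by (rule tendsto_eventually)
    qed
  qed (auto simp: indicator_def)
  then show ?thesis unfolding Phi_alt[abs_def] by simp
qed

lemma Phi_inv_props:
  assumes "0 < q" "q < 1" "0 < e"
  shows "Phi (Phi_inv q - e) < q" "q < Phi (Phi_inv q + e)"
proof -
  let ?S = "{x. q \<le> Phi x}"
  obtain y where y: "Phi y > q - 0" "True"
  proof -
    have "\<forall>\<^sub>F x in at_top. Phi x > q" using Phi_top assms(2) by (rule order_tendstoD)
    then obtain y where "Phi y > q" by (meson eventually_happens' trivial_limit_at_top_linorder)
    then show ?thesis using that by auto
  qed
  obtain b where b: "Phi b < q"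
  proof -
    have "\<forall>\<^sub>F x in at_top. Phi (-x) < q" using Phi_bot assms(1) by (rule order_tendstoD)
    then obtain x where "Phi (-x) < q" by (meson eventually_happens' trivial_limit_at_top_linorder)
    then show ?thesis using that by auto
  qed
  have "y \<in> ?S" using y by simp
  then have ne: "?S \<noteq> {}" by auto
  have bdd: "bdd_below ?S"
  proof
    fix x assume "x \<in> ?S"
    then show "b \<le> x" using b Phi_mono[of x b] by (cases "x \<le> b") auto
  qed
  show "Phi (Phi_inv q - e) < q"
  proof (rule ccontr)
    assume "\<not> ?thesis"
    then have "Phi_inv q - e \<in> ?S" by auto
    then have "Phi_inv q \<le> Phi_inv q - e" unfolding Phi_inv_def by (rule cInf_lower[OF _ bdd])
    then show False using assms by simp
  qed
  have "\<exists>x\<in>?S. x < Phi_inv q + e"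
    unfolding Phi_inv_def using cInf_less_iff[OF ne bdd, of "Inf ?S + e"] assms by auto
  then obtain x where "q \<le> Phi x" "x < Phi_inv q + e" by auto
  then show "q < Phi (Phi_inv q + e)" using Phi_strict by fastforce
qed



definition sk :: "real \<Rightarrow> real" where "sk \<kappa> = sqrt (\<kappa>/2)"
definition Ek :: "real \<Rightarrow> real \<Rightarrow> real" where
  "Ek \<kappa> u = (if - sk \<kappa> < u then (1 + u / sk \<kappa>) powr (\<kappa>/2 - 1) * exp (- sk \<kappa> * u) else 0)"
definition Ck :: "real \<Rightarrow> real" where
  "Ck \<kappa> = sk \<kappa> * (\<kappa>/2) powr (\<kappa>/2 - 1) * exp (-(\<kappa>/2)) / Gamma (\<kappa>/2)"

lemma sk_pos: "0 < \<kappa> \<Longrightarrow> 0 < sk \<kappa>" by (simp add: sk_def)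
lemma sk_sq: "0 < \<kappa> \<Longrightarrow> sk \<kappa> * sk \<kappa> = \<kappa>/2" by (simp add: sk_def)

lemma chi2_density_nonneg: "0 < \<kappa> \<Longrightarrow> 0 \<le> chi2_density \<kappa> t"
  by (simp add: chi2_density_def)

lemma chi2_density_meas[measurable]: "chi2_density \<kappa> \<in> borel_measurable borel"
  unfolding chi2_density_def[abs_def] by measurable

lemma chi2_density_alt:
  assumes "0 < \<kappa>"
  shows "chi2_density \<kappa> x = (1 / (2 * Gamma (\<kappa>/2))) *
      (indicator {0..} (0 + 1/2 * x) * (0 + 1/2 * x) powr (\<kappa>/2 - 1) / exp (0 + 1/2 * x))"
proof (cases "x > 0")
  case True
  have g: "Gamma (\<kappa>/2) > 0" using assms by simp
  have "(x/2) powr (\<kappa>/2 - 1) = x powr (\<kappa>/2 - 1) / 2 powr (\<kappa>/2 - 1)" by (rule powr_divide)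
  moreover have "2 powr (\<kappa>/2) = 2 powr (\<kappa>/2 - 1) * 2"
    using powr_add[of "2::real" "\<kappa>/2 - 1" 1] by simp
  moreover have "exp (- x / 2) = 1 / exp (x/2)" by (simp add: exp_minus field_simps)
  ultimately show ?thesis using True g
    by (simp add: chi2_density_def field_simps)
next
  case False
  then show ?thesis
    by (cases "x = 0") (auto simp: chi2_density_def indicator_def)
qed

lemma chi2_density_int:
  assumes "0 < \<kappa>"
  shows "integrable lborel (chi2_density \<kappa>)" "(\<integral>t. chi2_density \<kappa> t \<partial>lborel) = 1"
proof -
  define F where "F t = indicator {0..} t * t powr (\<kappa>/2 - 1) / exp t" for t :: real
  have Fm[measurable]: "F \<in> borel_measurable borel" unfolding F_def[abs_def] by measurable
  have Fnn: "0 \<le> F t" for t by (simp add: F_def indicator_def)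
  have G: "Gamma (\<kappa>/2) = (\<integral>\<^sup>+t. ennreal (F t) \<partial>lborel)"
    unfolding F_def using Gamma_conv_nn_integral_real[of "\<kappa>/2"] assms by simp
  have aff: "(\<integral>\<^sup>+t. ennreal (F t) \<partial>lborel) = ennreal \<bar>1/2::real\<bar> * (\<integral>\<^sup>+x. ennreal (F (0 + 1/2 * x)) \<partial>lborel)"
    by (rule nn_integral_real_affine) auto
  have g: "Gamma (\<kappa>/2) > 0" using assms by simp
  have "(\<integral>\<^sup>+x. ennreal (chi2_density \<kappa> x) \<partial>lborel)
      = (\<integral>\<^sup>+x. ennreal (1 / (2 * Gamma (\<kappa>/2))) * ennreal (F (0 + 1/2 * x)) \<partial>lborel)"
    using g Fnn by (intro nn_integral_cong) (simp add: chi2_density_alt[OF assms] F_def ennreal_mult[symmetric])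
  also have "\<dots> = ennreal (1 / (2 * Gamma (\<kappa>/2))) * (\<integral>\<^sup>+x. ennreal (F (0 + 1/2 * x)) \<partial>lborel)"
    by (rule nn_integral_cmult) measurable
  also have "(\<integral>\<^sup>+x. ennreal (F (0 + 1/2 * x)) \<partial>lborel) = ennreal (2 * Gamma (\<kappa>/2))"
  proof -
    have "ennreal (Gamma (\<kappa>/2)) = ennreal (1/2) * (\<integral>\<^sup>+x. ennreal (F (0 + 1/2 * x)) \<partial>lborel)"
      using G aff by simp
    then have "ennreal 2 * ennreal (Gamma (\<kappa>/2)) = (ennreal 2 * ennreal (1/2)) * (\<integral>\<^sup>+x. ennreal (F (0 + 1/2 * x)) \<partial>lborel)"
      by (simp add: mult.assoc)
    also have "ennreal 2 * ennreal (1/2) = 1" by (subst ennreal_mult[symmetric]) auto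
    finally show ?thesis using g by (simp add: ennreal_mult)
  qed
  also have "ennreal (1 / (2 * Gamma (\<kappa>/2))) * ennreal (2 * Gamma (\<kappa>/2)) = ennreal 1"
    using g by (simp add: ennreal_mult[symmetric])
  finally have N: "(\<integral>\<^sup>+x. ennreal (chi2_density \<kappa> x) \<partial>lborel) = ennreal 1" .
  have "integrable lborel (chi2_density \<kappa>) \<and> integral\<^sup>L lborel (chi2_density \<kappa>) = 1"
    using nn_integral_eq_integrable[of "chi2_density \<kappa>" lborel 1] N chi2_density_nonneg[OF assms] by simp
  then show "integrable lborel (chi2_density \<kappa>)" "(\<integral>t. chi2_density \<kappa> t \<partial>lborel) = 1" by auto
qed

lemma chi2_density_std:
  assumes "0 < \<kappa>"
  shows "2 * sk \<kappa> * chi2_density \<kappa> (\<kappa> + 2 * sk \<kappa> * u) = Ck \<kappa> * Ek \<kappa> u"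
proof -
  define s where "s = sk \<kappa>"
  define a where "a = \<kappa>/2"
  have s: "0 < s" "s * s = a" using sk_pos[OF assms] sk_sq[OF assms] by (simp_all add: s_def a_def)
  have k: "\<kappa> + 2 * s * u = 2 * (s * (s + u))" using s(2) by (simp add: a_def algebra_simps)
  show ?thesis
  proof (cases "- s < u")
    case True
    then have p: "0 < s * (s + u)" using s by simp
    have e1: "(2 * (s * (s + u))) powr (a - 1) = 2 powr (a - 1) * (s * (s + u)) powr (a - 1)"
      by (rule powr_mult)
    have e2: "a powr (a - 1) * (1 + u / s) powr (a - 1) = (s * (s + u)) powr (a - 1)"
    proof -
      have "a * (1 + u / s) = s * (s + u)" using s by (simp add: field_simps flip: s(2))
      then show ?thesis by (metis powr_mult)
    qed
    have e3: "2 powr a = 2 powr (a - 1) * 2" using powr_add[of "2::real" "a - 1" 1] by simp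
    have e4: "exp (- (2 * (s * (s + u))) / 2) = exp (- a) * exp (- s * u)"
      by (simp add: exp_add[symmetric] flip: s(2)) (simp add: algebra_simps)
    have g: "Gamma a > 0" using assms by (simp add: a_def)
    have "2 * s * chi2_density \<kappa> (\<kappa> + 2 * s * u)
        = 2 * s * ((2 * (s * (s + u))) powr (a - 1) * exp (- (2 * (s * (s + u))) / 2) / (2 powr a * Gamma a))"
      unfolding k using p by (simp add: chi2_density_def a_def)
    also have "\<dots> = s * (a powr (a - 1) * (1 + u / s) powr (a - 1)) * (exp (- a) * exp (- s * u)) / Gamma a"
      unfolding e1 e2 e3 e4 using g by (simp add: field_simps)
    also have "\<dots> = Ck \<kappa> * Ek \<kappa> u"
      using True by (simp add: Ck_def Ek_def s_def a_def)
    finally show ?thesis by (simp add: s_def)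
  next
    case False
    then have "\<kappa> + 2 * s * u \<le> 0" using k s by (simp add: mult_nonneg_nonpos)
    then show ?thesis using False by (simp add: chi2_density_def Ek_def s_def)
  qed
qed



lemma chi2_cdf_alt: "chi2_cdf \<kappa> x = (\<integral>t. indicator {0..x} t * chi2_density \<kappa> t \<partial>lborel)"
  by (simp add: chi2_cdf_def set_lebesgue_integral_def)

lemma chi2_cdf_neg: "x < 0 \<Longrightarrow> chi2_cdf \<kappa> x = 0"
  by (simp add: chi2_cdf_alt)

lemma chi2_cdf_mono:
  assumes "0 < \<kappa>" "x \<le> y"
  shows "chi2_cdf \<kappa> x \<le> chi2_cdf \<kappa> y"
proof -
  have i: "integrable lborel (\<lambda>t. indicator A t * chi2_density \<kappa> t)" if "A \<in> sets borel" for A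
    using integrable_mult_indicator[of A lborel "chi2_density \<kappa>"] that chi2_density_int(1)[OF assms(1)] by simp
  show ?thesis unfolding chi2_cdf_alt
    by (rule integral_mono[OF i i]) (use assms chi2_density_nonneg[OF assms(1)] in \<open>auto simp: indicator_def\<close>)
qed

lemma chi2_cdf_std:
  assumes "0 < \<kappa>"
  shows "chi2_cdf \<kappa> (\<kappa> + 2 * sk \<kappa> * z) = Ck \<kappa> * (\<integral>u. indicator {..z} u * Ek \<kappa> u \<partial>lborel)"
proof -
  define s where "s = sk \<kappa>"
  have s: "0 < s" using sk_pos[OF assms] by (simp add: s_def)
  have "chi2_cdf \<kappa> (\<kappa> + 2 * s * z)
      = \<bar>2 * s\<bar> *\<^sub>R (\<integral>u. indicator {0..\<kappa> + 2 * s * z} (\<kappa> + 2 * s * u) * chi2_density \<kappa> (\<kappa> + 2 * s * u) \<partial>lborel)"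
    unfolding chi2_cdf_alt by (rule lborel_integral_real_affine) (use s in auto)
  also have "\<dots> = (\<integral>u. 2 * s * (indicator {..z} u * chi2_density \<kappa> (\<kappa> + 2 * s * u)) \<partial>lborel)"
  proof -
    have "indicator {0..\<kappa> + 2 * s * z} (\<kappa> + 2 * s * u) * chi2_density \<kappa> (\<kappa> + 2 * s * u)
        = indicator {..z} u * chi2_density \<kappa> (\<kappa> + 2 * s * u)" (is "?L u = ?R u") for u
    proof (cases "\<kappa> + 2 * s * u > 0")
      case True
      then show ?thesis using s by (auto simp: indicator_def)
    next
      case False
      then show ?thesis by (simp add: chi2_density_def)
    qed
    then have "(\<lambda>u. ?L u) = (\<lambda>u. ?R u)" by (rule ext)
    then show ?thesis using s by simp
  qed
  also have "\<dots> = (\<integral>u. Ck \<kappa> * (indicator {..z} u * Ek \<kappa> u) \<partial>lborel)"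
  proof -
    have "2 * s * (indicator {..z} u * chi2_density \<kappa> (\<kappa> + 2 * s * u)) = Ck \<kappa> * (indicator {..z} u * Ek \<kappa> u)" (is "?L u = ?R u") for u
      using chi2_density_std[OF assms, of u] by (simp add: s_def indicator_def)
    then have "(\<lambda>u. ?L u) = (\<lambda>u. ?R u)" by (rule ext)
    then show ?thesis by (simp only:)
  qed
  also have "\<dots> = Ck \<kappa> * (\<integral>u. indicator {..z} u * Ek \<kappa> u \<partial>lborel)" by simp
  finally show ?thesis by (simp add: s_def)
qed

lemma Ek_norm:
  assumes "0 < \<kappa>"
  shows "Ck \<kappa> * (\<integral>u. Ek \<kappa> u \<partial>lborel) = 1"
proof -
  define s where "s = sk \<kappa>"
  have s: "0 < s" using sk_pos[OF assms] by (simp add: s_def)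
  have "1 = (\<integral>t. chi2_density \<kappa> t \<partial>lborel)" using chi2_density_int(2)[OF assms] by simp
  also have "\<dots> = \<bar>2 * s\<bar> *\<^sub>R (\<integral>u. chi2_density \<kappa> (\<kappa> + 2 * s * u) \<partial>lborel)"
    by (rule lborel_integral_real_affine) (use s in auto)
  also have "\<dots> = (\<integral>u. 2 * s * chi2_density \<kappa> (\<kappa> + 2 * s * u) \<partial>lborel)" using s by simp
  also have "\<dots> = (\<integral>u. Ck \<kappa> * Ek \<kappa> u \<partial>lborel)"
    using chi2_density_std[OF assms] by (simp add: s_def)
  also have "\<dots> = Ck \<kappa> * (\<integral>u. Ek \<kappa> u \<partial>lborel)" by simp
  finally show ?thesis by simp
qed

lemma Ek_meas[measurable]: "Ek \<kappa> \<in> borel_measurable borel"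
  unfolding Ek_def[abs_def] by measurable

lemma ln_ub_pos:
  fixes x :: real assumes "0 \<le> x"
  shows "ln (1 + x) \<le> x - x\<^sup>2 / (2 * (1 + x))"
proof -
  let ?h = "\<lambda>x::real. x - x\<^sup>2 / (2 * (1 + x)) - ln (1 + x)"
  have "?h 0 \<le> ?h x"
  proof (rule DERIV_nonneg_imp_nondecreasing[OF assms])
    fix y :: real assume y: "0 \<le> y" "y \<le> x"
    have "(?h has_real_derivative (1 - (2 * y * (2 * (1 + y)) - y\<^sup>2 * 2) / (2 * (1 + y))\<^sup>2 - 1 / (1 + y))) (at y)"
      using y by (auto intro!: derivative_eq_intros simp: power2_eq_square)
    moreover have "1 - (2 * y * (2 * (1 + y)) - y\<^sup>2 * 2) / (2 * (1 + y))\<^sup>2 - 1 / (1 + y) = y\<^sup>2 / (2 * (1 + y)\<^sup>2)"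
    proof -
      have p: "1 + y > 0" using y by simp
      have "(2 * (1 + y))\<^sup>2 = 4 * (1+y)\<^sup>2" by (simp add: power2_eq_square algebra_simps)
      then show ?thesis using p by (simp add: divide_simps) (simp add: power2_eq_square algebra_simps)
    qed
    ultimately show "\<exists>d. (?h has_real_derivative d) (at y) \<and> 0 \<le> d" by auto
  qed
  then show ?thesis by simp
qed

lemma ln_ub_neg:
  fixes x :: real assumes "-1 < x" "x \<le> 0"
  shows "ln (1 + x) \<le> x - x\<^sup>2 / 2"
proof -
  let ?h = "\<lambda>x::real. x - x\<^sup>2 / 2 - ln (1 + x)"
  have "?h 0 \<le> ?h x"
  proof (rule DERIV_nonpos_imp_nonincreasing[OF assms(2)])
    fix y :: real assume y: "x \<le> y" "y \<le> 0"
    have "(?h has_real_derivative (1 - y - 1 / (1 + y))) (at y)"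
      using y assms by (auto intro!: derivative_eq_intros simp: power2_eq_square)
    moreover have "1 - y - 1 / (1 + y) = - (y\<^sup>2 / (1 + y))"
      using y assms by (simp add: field_simps power2_eq_square)
    moreover have "y\<^sup>2 / (1 + y) \<ge> 0" using y assms by simp
    ultimately show "\<exists>d. (?h has_real_derivative d) (at y) \<and> d \<le> 0" by auto
  qed
  then show ?thesis by simp
qed



lemma sqrt2k: "sqrt (2 * \<kappa>) = 2 * sk \<kappa>"
proof -
  have "sqrt (2 * \<kappa>) = sqrt (4 * (\<kappa>/2))" by simp
  also have "\<dots> = sqrt 4 * sqrt (\<kappa>/2)" by (rule real_sqrt_mult)
  also have "sqrt (4::real) = 2"
  proof -
    have "(4::real) = 2\<^sup>2" by simp
    then show ?thesis using real_sqrt_abs[of "2::real"] by simp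
  qed
  finally show ?thesis by (simp add: sk_def)
qed

lemma exp_split: "exp (A - B) = exp A * exp (- B)" for A B :: real
  by (metis exp_add diff_conv_add_uminus)

lemma Ek_bound:
  assumes "4 \<le> \<kappa>"
  shows "0 \<le> Ek \<kappa> u" "Ek \<kappa> u \<le> exp (4 - \<bar>u\<bar>/2)"
proof -
  show "0 \<le> Ek \<kappa> u" by (simp add: Ek_def)
  define s where "s = sk \<kappa>"
  define a where "a = \<kappa>/2"
  have s: "0 < s" "s * s = a" using sk_pos[of \<kappa>] sk_sq[of \<kappa>] assms by (simp_all add: s_def a_def)
  have a2: "2 \<le> a" using assms by (simp add: a_def)
  have s1: "1 \<le> s"
  proof (rule ccontr)
    assume "\<not> 1 \<le> s"
    then have "s * s < 1 * 1" using s(1) by (intro mult_strict_mono) auto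
    then show False using s a2 by simp
  qed
  show "Ek \<kappa> u \<le> exp (4 - \<bar>u\<bar>/2)"
  proof (cases "- s < u")
    case False
    then show ?thesis by (simp add: Ek_def s_def)
  next
    case True
    define x where "x = u / s"
    have x1: "-1 < x" using True s by (simp add: x_def field_simps)
    have ax: "a * x = s * u" using s by (simp add: x_def field_simps flip: s(2))
    have E: "Ek \<kappa> u = exp ((a - 1) * ln (1 + x) - s * u)"
    proof -
      have "Ek \<kappa> u = (1 + x) powr (a - 1) * exp (- (s * u))"
        using True by (simp add: Ek_def s_def a_def x_def)
      also have "(1 + x) powr (a - 1) = exp ((a - 1) * ln (1 + x))"
        by (subst powr_def) (use x1 in simp)
      finally show ?thesis by (simp only: exp_split)
    qed
    have psi: "(a - 1) * ln (1 + x) - s * u \<le> 4 - \<bar>u\<bar>/2"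
    proof (cases "0 \<le> u")
      case True
      have x0: "0 \<le> x" using True s by (simp add: x_def)
      have xu: "x \<le> u" using True s1 s by (simp add: x_def divide_le_eq) (metis mult_le_cancel_left1 True s1 order_trans mult.commute linorder_not_less mult_le_cancel_right1 le_less)
      have l0: "0 \<le> ln (1 + x)" using x0 by simp
      have "(a - 1) * ln (1 + x) \<le> a * ln (1 + x)" using l0 by (simp add: algebra_simps)
      also have "\<dots> \<le> a * (x - x\<^sup>2 / (2 * (1 + x)))"
        using ln_ub_pos[OF x0] a2 by (intro mult_left_mono) auto
      also have "\<dots> = s * u - u\<^sup>2 / (2 * (1 + x))"
      proof -
        have "a * x\<^sup>2 = u\<^sup>2" using s by (simp add: x_def power2_eq_square field_simps flip: s(2))
        then show ?thesis using ax x0 by (simp add: right_diff_distrib)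
      qed
      finally have 1: "(a - 1) * ln (1 + x) \<le> s * u - u\<^sup>2 / (2 * (1 + x))" .
      have "u\<^sup>2 / (2 * (1 + u)) \<le> u\<^sup>2 / (2 * (1 + x))"
        using xu x0 by (intro divide_left_mono) auto
      moreover have "u / 2 - 1/2 \<le> u\<^sup>2 / (2 * (1 + u))"
        using True by (simp add: field_simps power2_eq_square)
      ultimately show ?thesis using 1 True by simp
    next
      case False
      have x0: "x \<le> 0" using False s by (simp add: x_def divide_nonpos_pos)
      have "(a - 1) * ln (1 + x) \<le> (a - 1) * (x - x\<^sup>2 / 2)"
        using ln_ub_neg[OF x1 x0] a2 by (intro mult_left_mono) auto
      also have "\<dots> = s * u - u / s - (a - 1) * u\<^sup>2 / (2 * a)"
        using s a2 by (simp add: x_def field_simps power2_eq_square flip: s(2))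
      finally have 1: "(a - 1) * ln (1 + x) - s * u \<le> - u / s - (a - 1) * u\<^sup>2 / (2 * a)" by simp
      have "u * s \<le> u * 1" using mult_left_mono_neg[OF s1, of u] False by simp
      then have "u \<le> u / s" using s by (simp add: le_divide_eq)
      then have "- u / s \<le> - u" by simp
      moreover have "u\<^sup>2 / 4 \<le> (a - 1) * u\<^sup>2 / (2 * a)"
        using a2 by (simp add: field_simps) (simp add: mult_right_mono power2_eq_square)
      moreover have "- u - u\<^sup>2 / 4 \<le> 4 + u / 2"
      proof -
        have "0 \<le> (u/2 + 3/2)\<^sup>2 + 7/4" by simp
        then show ?thesis by (simp add: power2_eq_square field_simps)
      qed
      ultimately show ?thesis using 1 False by simp
    qed
    show ?thesis unfolding E using psi by simp
  qed
qed

lemma Ek_lim_aux0: "((\<lambda>s::real. (s\<^sup>2 - 1) * ln (1 + u / s) - s * u) \<longlongrightarrow> - (u * u / 2)) at_top"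
  by real_asymp

lemma Ek_lim_aux: "((\<lambda>k::real. (k/2 - 1) * ln (1 + u / sqrt (k/2)) - sqrt (k/2) * u) \<longlongrightarrow> - (u * u / 2)) at_top"
proof -
  have f: "filterlim (\<lambda>k::real. sqrt (k/2)) at_top at_top" by real_asymp
  have "((\<lambda>k::real. ((sqrt (k/2))\<^sup>2 - 1) * ln (1 + u / sqrt (k/2)) - sqrt (k/2) * u) \<longlongrightarrow> - (u * u / 2)) at_top"
    using filterlim_compose[OF Ek_lim_aux0 f] by (simp add: o_def)
  moreover have "\<forall>\<^sub>F k in at_top. ((sqrt (k/2))\<^sup>2 - 1) * ln (1 + u / sqrt (k/2)) - sqrt (k/2) * u
      = (k/2 - 1) * ln (1 + u / sqrt (k/2)) - sqrt (k/2) * u"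
    using eventually_ge_at_top[of "0::real"] by eventually_elim simp
  ultimately show ?thesis by (rule Lim_transform_eventually)
qed

lemma Ek_lim: "((\<lambda>\<kappa>. Ek \<kappa> u) \<longlongrightarrow> exp (- (u\<^sup>2) / 2)) at_top"
proof -
  have "((\<lambda>k::real. exp ((k/2 - 1) * ln (1 + u / sqrt (k/2)) - sqrt (k/2) * u)) \<longlongrightarrow> exp (- (u * u / 2))) at_top"
    by (intro tendsto_intros Ek_lim_aux)
  moreover have "\<forall>\<^sub>F k in at_top. exp ((k/2 - 1) * ln (1 + u / sqrt (k/2)) - sqrt (k/2) * u) = Ek k u"
    using eventually_gt_at_top[of "2 * u\<^sup>2"]
  proof eventually_elim
    case (elim k)
    have "u\<^sup>2 < k/2" using elim by simp
    then have "\<bar>u\<bar> < sqrt (k/2)" using real_less_rsqrt by (metis power2_abs)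
    then have su: "- sk k < u" by (simp add: sk_def)
    have "0 \<le> 2 * u\<^sup>2" by simp
    then have k0: "0 < k" using elim by linarith
    have p: "0 < 1 + u / sk k" using sk_pos[OF k0] su
      by (simp add: field_simps)
    have "Ek k u = (1 + u / sk k) powr (k/2 - 1) * exp (- (sk k * u))"
      using su by (simp add: Ek_def)
    also have "(1 + u / sk k) powr (k/2 - 1) = exp ((k/2 - 1) * ln (1 + u / sk k))"
      by (subst powr_def) (use p in simp)
    finally show ?case by (simp only: exp_split sk_def)
  qed
  ultimately show ?thesis by (simp add: tendsto_cong power2_eq_square)
qed



definition fexp :: "real \<Rightarrow> real" where "fexp u = indicator {0<..} u * exp (- (u * (1/2)))"
definition W :: "real \<Rightarrow> real" where "W u = exp 4 * (fexp u + fexp (- u) + indicator {-1..1} u)"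

lemma W_int: "integrable lborel W"
proof -
  have f: "integrable lborel fexp"
    using integrable_I0i_exp_mscale[of "1/2"] unfolding set_integrable_def fexp_def[abs_def] by simp
  have f2: "integrable lborel (\<lambda>u. fexp (0 + (-1) * u))"
    by (rule lborel_integrable_real_affine[OF f]) simp
  have i: "integrable lborel (indicator {-1..1::real} :: real \<Rightarrow> real)"
    by (rule integrable_real_indicator) auto
  show ?thesis unfolding W_def[abs_def]
    using f f2 i by (intro integrable_mult_right integrable_add) auto
qed

lemma W_meas[measurable]: "W \<in> borel_measurable borel"
  unfolding W_def[abs_def] fexp_def[abs_def] by measurable

lemma W_bound: "exp (4 - \<bar>u\<bar>/2) \<le> W u"
proof -
  have nn: "0 \<le> fexp v" for v by (simp add: fexp_def)
  have e: "exp (4 - \<bar>u\<bar>/2) = exp 4 * exp (- (\<bar>u\<bar> * (1/2)))" by (simp add: exp_split)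
  consider "u > 0" | "u < 0" | "u = 0" by linarith
  then show ?thesis
  proof cases
    case 1
    then show ?thesis unfolding e W_def using nn[of "-u"]
      by (simp add: fexp_def indicator_def)
  next
    case 2
    then show ?thesis unfolding e W_def using nn[of "u"]
      by (simp add: fexp_def indicator_def)
  next
    case 3
    then show ?thesis by (simp add: W_def fexp_def)
  qed
qed

lemma Ek_lim': "((\<lambda>\<kappa>. Ek \<kappa> u) \<longlongrightarrow> exp (- (u\<^sup>2 / 2))) at_top"
  using Ek_lim[of u] by simp

lemma chi2_cdf_normal: "((\<lambda>\<kappa>. chi2_cdf \<kappa> (\<kappa> + sqrt (2 * \<kappa>) * z)) \<longlongrightarrow> Phi z) at_top"
proof -
  have bnd: "\<forall>\<^sub>F \<kappa> in at_top. AE u in lborel. norm (g u * Ek \<kappa> u) \<le> W u"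
    if g: "\<And>u. \<bar>g u\<bar> \<le> 1" for g :: "real \<Rightarrow> real"
    using eventually_ge_at_top[of "4::real"]
  proof eventually_elim
    case (elim \<kappa>)
    show ?case
    proof (rule AE_I2)
      fix u
      have "\<bar>g u\<bar> * Ek \<kappa> u \<le> 1 * Ek \<kappa> u"
        using g[of u] Ek_bound(1)[OF elim] by (intro mult_right_mono) auto
      then show "norm (g u * Ek \<kappa> u) \<le> W u"
        using Ek_bound[OF elim, of u] W_bound[of u] by (simp add: abs_mult)
    qed
  qed
  have I: "((\<lambda>\<kappa>. \<integral>u. 1 * Ek \<kappa> u \<partial>lborel) \<longlongrightarrow> (\<integral>u. 1 * exp (- (u\<^sup>2) / 2) \<partial>lborel)) at_top"
    by (rule integral_dominated_convergence_at_top[where w=W, OF _ _ W_int _ bnd])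
       (auto intro!: AE_I2 tendsto_intros Ek_lim')
  have K: "((\<lambda>\<kappa>. \<integral>u. indicator {..z} u * Ek \<kappa> u \<partial>lborel)
       \<longlongrightarrow> (\<integral>u. indicator {..z} u * exp (- (u\<^sup>2) / 2) \<partial>lborel)) at_top"
    by (rule integral_dominated_convergence_at_top[where w=W, OF _ _ W_int _ bnd])
       (auto intro!: AE_I2 tendsto_intros Ek_lim' simp: indicator_def)
  have ex: "exp (- (u\<^sup>2) / 2) = sqrt (2 * pi) * std_normal_density u" for u
    by (simp add: std_normal_density_def)
  have J: "(\<integral>u. 1 * exp (- (u\<^sup>2) / 2) \<partial>lborel) = sqrt (2 * pi)"
    unfolding ex by simp
  have KJ: "(\<integral>u. indicator {..z} u * exp (- (u\<^sup>2) / 2) \<partial>lborel) = sqrt (2 * pi) * Phi z"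
  proof -
    have "(\<integral>u. indicator {..z} u * exp (- (u\<^sup>2) / 2) \<partial>lborel)
        = (\<integral>u. sqrt (2 * pi) * (indicator {..z} u * std_normal_density u) \<partial>lborel)"
      unfolding ex by (simp add: ac_simps)
    also have "\<dots> = sqrt (2 * pi) * Phi z" by (simp add: Phi_alt)
    finally show ?thesis .
  qed
  have lim: "((\<lambda>\<kappa>. (\<integral>u. indicator {..z} u * Ek \<kappa> u \<partial>lborel) / (\<integral>u. 1 * Ek \<kappa> u \<partial>lborel))
     \<longlongrightarrow> (sqrt (2 * pi) * Phi z) / sqrt (2 * pi)) at_top"
    using tendsto_divide[OF K I] unfolding J KJ by simp
  have ev: "\<forall>\<^sub>F \<kappa> in at_top. (\<integral>u. indicator {..z} u * Ek \<kappa> u \<partial>lborel) / (\<integral>u. 1 * Ek \<kappa> u \<partial>lborel)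
      = chi2_cdf \<kappa> (\<kappa> + sqrt (2 * \<kappa>) * z)"
    using eventually_gt_at_top[of "0::real"]
  proof eventually_elim
    case (elim \<kappa>)
    have n: "Ck \<kappa> * (\<integral>u. Ek \<kappa> u \<partial>lborel) = 1" by (rule Ek_norm[OF elim])
    then have "(\<integral>u. Ek \<kappa> u \<partial>lborel) \<noteq> 0" by auto
    then show ?case using n unfolding sqrt2k chi2_cdf_std[OF elim]
      by (simp add: field_simps mult.assoc)
  qed
  show ?thesis using Lim_transform_eventually[OF lim ev] by simp
qed



lemma quantile_upper:
  assumes "0 < \<kappa>" "0 < q" "q < chi2_cdf \<kappa> x"
  shows "chi2_quantile \<kappa> q \<le> x"
proof -
  have bdd: "bdd_below {x. q \<le> chi2_cdf \<kappa> x}"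
  proof
    fix y assume "y \<in> {x. q \<le> chi2_cdf \<kappa> x}"
    then show "0 \<le> y" using assms(2) chi2_cdf_neg[of y \<kappa>] by (cases "y < 0") auto
  qed
  show ?thesis unfolding chi2_quantile_def
    by (rule cInf_lower[OF _ bdd]) (use assms in simp)
qed

lemma quantile_lower:
  assumes "0 < \<kappa>" "chi2_cdf \<kappa> x < q" "q \<le> chi2_cdf \<kappa> y"
  shows "x \<le> chi2_quantile \<kappa> q"
  unfolding chi2_quantile_def
proof (rule cInf_greatest)
  show "{x. q \<le> chi2_cdf \<kappa> x} \<noteq> {}" using assms(3) by auto
  fix t assume "t \<in> {x. q \<le> chi2_cdf \<kappa> x}"
  then show "x \<le> t" using chi2_cdf_mono[OF assms(1), of t x] assms(2) by (cases "t \<le> x") auto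
qed

lemma quantile_lim:
  assumes "0 < q" "q < 1"
  shows "((\<lambda>\<kappa>. (chi2_quantile \<kappa> q - \<kappa>) / sqrt (2 * \<kappa>)) \<longlongrightarrow> Phi_inv q) at_top"
proof (rule order_tendstoI)
  let ?z = "Phi_inv q"
  have up: "\<forall>\<^sub>F \<kappa> in at_top. q < chi2_cdf \<kappa> (\<kappa> + sqrt (2 * \<kappa>) * (?z + e))" if "0 < e" for e
    using chi2_cdf_normal[of "?z + e"] Phi_inv_props(2)[OF assms that] by (rule order_tendstoD)
  have lo: "\<forall>\<^sub>F \<kappa> in at_top. chi2_cdf \<kappa> (\<kappa> + sqrt (2 * \<kappa>) * (?z - e)) < q" if "0 < e" for e
    using chi2_cdf_normal[of "?z - e"] Phi_inv_props(1)[OF assms that] by (rule order_tendstoD)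
  fix b assume b: "?z < b"
  define e where "e = (b - ?z) / 2"
  have e: "0 < e" using b by (simp add: e_def)
  show "\<forall>\<^sub>F \<kappa> in at_top. (chi2_quantile \<kappa> q - \<kappa>) / sqrt (2 * \<kappa>) < b"
    using up[OF e] eventually_gt_at_top[of "0::real"]
  proof eventually_elim
    case (elim \<kappa>)
    have "chi2_quantile \<kappa> q \<le> \<kappa> + sqrt (2 * \<kappa>) * (?z + e)"
      by (rule quantile_upper) (use elim assms in auto)
    then have "(chi2_quantile \<kappa> q - \<kappa>) / sqrt (2 * \<kappa>) \<le> ?z + e"
      using elim by (simp add: pos_divide_le_eq mult.commute)
    moreover have "?z + e < b" using b by (simp add: e_def field_simps)
    ultimately show ?case by (rule order.strict_trans1)
  qed
next
  let ?z = "Phi_inv q"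
  have up: "\<forall>\<^sub>F \<kappa> in at_top. q < chi2_cdf \<kappa> (\<kappa> + sqrt (2 * \<kappa>) * (?z + e))" if "0 < e" for e
    using chi2_cdf_normal[of "?z + e"] Phi_inv_props(2)[OF assms that] by (rule order_tendstoD)
  have lo: "\<forall>\<^sub>F \<kappa> in at_top. chi2_cdf \<kappa> (\<kappa> + sqrt (2 * \<kappa>) * (?z - e)) < q" if "0 < e" for e
    using chi2_cdf_normal[of "?z - e"] Phi_inv_props(1)[OF assms that] by (rule order_tendstoD)
  fix a assume a: "a < ?z"
  define e where "e = (?z - a) / 2"
  have e: "0 < e" using a by (simp add: e_def)
  show "\<forall>\<^sub>F \<kappa> in at_top. a < (chi2_quantile \<kappa> q - \<kappa>) / sqrt (2 * \<kappa>)"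
    using up[OF zero_less_one] lo[OF e] eventually_gt_at_top[of "0::real"]
  proof eventually_elim
    case (elim \<kappa>)
    have "\<kappa> + sqrt (2 * \<kappa>) * (?z - e) \<le> chi2_quantile \<kappa> q"
      by (rule quantile_lower[where y="\<kappa> + sqrt (2 * \<kappa>) * (?z + 1)"]) (use elim in auto)
    then have "?z - e \<le> (chi2_quantile \<kappa> q - \<kappa>) / sqrt (2 * \<kappa>)"
      using elim by (simp add: pos_le_divide_eq mult.commute)
    moreover have "a < ?z - e" using a by (simp add: e_def field_simps)
    ultimately show ?case by (meson order_less_le_trans)
  qed
qed



lemma cdf_sandwich:
  assumes "(w::real) = w" and M: "0 < m"
    and Wlim: "(Wf \<longlongrightarrow> w) at_top"
  shows "((\<lambda>\<kappa>. chi2_cdf (m * \<kappa>) (m * \<kappa> + sqrt (2 * (m * \<kappa>)) * Wf \<kappa>)) \<longlongrightarrow> Phi w) at_top"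
proof (rule tendstoI)
  fix \<epsilon> :: real assume \<epsilon>: "0 < \<epsilon>"
  define d where "d = \<epsilon> / 3"
  have d: "0 < d" using \<epsilon> by (simp add: d_def)
  have fm: "filterlim (\<lambda>\<kappa>. m * \<kappa>) at_top at_top"
    using M by (intro filterlim_tendsto_pos_mult_at_top[OF tendsto_const] filterlim_ident) auto
  have L: "((\<lambda>\<kappa>. chi2_cdf (m * \<kappa>) (m * \<kappa> + sqrt (2 * (m * \<kappa>)) * c)) \<longlongrightarrow> Phi c) at_top" for c
    using filterlim_compose[OF chi2_cdf_normal[of c] fm] by (simp add: o_def)
  have e1: "\<forall>\<^sub>F \<kappa> in at_top. chi2_cdf (m * \<kappa>) (m * \<kappa> + sqrt (2 * (m * \<kappa>)) * (w + d)) < Phi (w + d) + d"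
    using L[of "w + d"] d by (intro order_tendstoD) auto
  have e2: "\<forall>\<^sub>F \<kappa> in at_top. Phi (w - d) - d < chi2_cdf (m * \<kappa>) (m * \<kappa> + sqrt (2 * (m * \<kappa>)) * (w - d))"
    using L[of "w - d"] d by (intro order_tendstoD) auto
  have e3: "\<forall>\<^sub>F \<kappa> in at_top. dist (Wf \<kappa>) w < d" using Wlim d by (rule tendstoD)
  show "\<forall>\<^sub>F \<kappa> in at_top. dist (chi2_cdf (m * \<kappa>) (m * \<kappa> + sqrt (2 * (m * \<kappa>)) * Wf \<kappa>)) (Phi w) < \<epsilon>"
    using e1 e2 e3 eventually_gt_at_top[of "0::real"]
  proof eventually_elim
    case (elim \<kappa>)
    have mk: "0 < m * \<kappa>" using M elim(4) by simp
    have sq: "0 \<le> sqrt (2 * (m * \<kappa>))" using mk by simp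
    have W: "w - d \<le> Wf \<kappa>" "Wf \<kappa> \<le> w + d" using elim(3) by (auto simp: dist_real_def)
    have "chi2_cdf (m * \<kappa>) (m * \<kappa> + sqrt (2 * (m * \<kappa>)) * Wf \<kappa>)
        \<le> chi2_cdf (m * \<kappa>) (m * \<kappa> + sqrt (2 * (m * \<kappa>)) * (w + d))"
      by (rule chi2_cdf_mono[OF mk]) (use W sq in \<open>simp add: mult_left_mono\<close>)
    moreover have "chi2_cdf (m * \<kappa>) (m * \<kappa> + sqrt (2 * (m * \<kappa>)) * (w - d))
        \<le> chi2_cdf (m * \<kappa>) (m * \<kappa> + sqrt (2 * (m * \<kappa>)) * Wf \<kappa>)"
      by (rule chi2_cdf_mono[OF mk]) (use W sq in \<open>simp add: mult_left_mono\<close>)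
    moreover have "Phi (w + d) \<le> Phi w + d" "Phi w - d \<le> Phi (w - d)"
      using Phi_lip[of w "w + d"] Phi_lip[of w "w - d"] d by (auto simp: abs_le_iff)
    ultimately show ?case using elim(1,2) unfolding dist_real_def abs_less_iff d_def by linarith
  qed
qed

theorem mainTheorem7:
  fixes M :: nat and p :: "nat \<Rightarrow> real"
  assumes "M \<ge> 1"
    and "\<forall>i\<in>{1..M}. 0 < p i \<and> p i < 1"
  shows "((\<lambda>\<kappa>. chi_pool M p \<kappa>) \<longlongrightarrow> Sto M p) at_top
     \<and> Sto M p = 1 - Phi ((1 / sqrt (real M)) * (\<Sum>i=1..M. Phi_inv (1 - p i)))"
proof
  show "Sto M p = 1 - Phi ((1 / sqrt (real M)) * (\<Sum>i=1..M. Phi_inv (1 - p i)))"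
    by (simp add: Sto_def)
  define m where "m = real M"
  have m: "0 < m" using assms(1) by (simp add: m_def)
  define wq where "wq i \<kappa> = (chi2_quantile \<kappa> (1 - p i) - \<kappa>) / sqrt (2 * \<kappa>)" for i \<kappa>
  define Wf where "Wf \<kappa> = (1 / sqrt m) * (\<Sum>i=1..M. wq i \<kappa>)" for \<kappa>
  define w where "w = (1 / sqrt m) * (\<Sum>i=1..M. Phi_inv (1 - p i))"
  have Wlim: "(Wf \<longlongrightarrow> w) at_top"
    unfolding Wf_def w_def
  proof (intro tendsto_mult tendsto_const tendsto_sum)
    fix i assume "i \<in> {1..M}"
    then have "0 < 1 - p i" "1 - p i < 1" using assms(2) by auto
    then show "((\<lambda>\<kappa>. wq i \<kappa>) \<longlongrightarrow> Phi_inv (1 - p i)) at_top"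
      unfolding wq_def by (rule quantile_lim)
  qed
  have lim: "((\<lambda>\<kappa>. 1 - chi2_cdf (m * \<kappa>) (m * \<kappa> + sqrt (2 * (m * \<kappa>)) * Wf \<kappa>)) \<longlongrightarrow> 1 - Phi w) at_top"
    by (intro tendsto_diff tendsto_const cdf_sandwich[OF refl m Wlim])
  have ev: "\<forall>\<^sub>F \<kappa> in at_top. 1 - chi2_cdf (m * \<kappa>) (m * \<kappa> + sqrt (2 * (m * \<kappa>)) * Wf \<kappa>) = chi_pool M p \<kappa>"
    using eventually_gt_at_top[of "0::real"]
  proof eventually_elim
    case (elim \<kappa>)
    have s: "0 < sqrt (2 * \<kappa>)" using elim by simp
    have q: "chi2_quantile \<kappa> (1 - p i) = \<kappa> + sqrt (2 * \<kappa>) * wq i \<kappa>" for i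
      using s by (simp add: wq_def)
    have "(\<Sum>i=1..M. chi2_quantile \<kappa> (1 - p i)) = m * \<kappa> + sqrt (2 * \<kappa>) * (\<Sum>i=1..M. wq i \<kappa>)"
      unfolding q by (simp add: sum.distrib sum_distrib_left m_def)
    also have "sqrt (2 * \<kappa>) = sqrt (2 * (m * \<kappa>)) * (1 / sqrt m)"
    proof -
      have "sqrt (2 * (m * \<kappa>)) = sqrt m * sqrt (2 * \<kappa>)" by (simp add: real_sqrt_mult[symmetric] ac_simps)
      then show ?thesis using m by simp
    qed
    finally have "(\<Sum>i=1..M. chi2_quantile \<kappa> (1 - p i)) = m * \<kappa> + sqrt (2 * (m * \<kappa>)) * Wf \<kappa>"
      by (simp add: Wf_def mult.assoc)
    then show ?case by (simp add: chi_pool_def m_def)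
  qed
  have "Sto M p = 1 - Phi w" by (simp add: Sto_def w_def m_def)
  then show "((\<lambda>\<kappa>. chi_pool M p \<kappa>) \<longlongrightarrow> Sto M p) at_top"
    using Lim_transform_eventually[OF lim ev] by simp
qed


end
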